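(* Let $d\ge2$, $q\ge2$, $p\in\mathbb{Z}/q\mathbb{Z}$ with $\gcd(p,q)=1$, and let $\mathcal{O}_1,\dots,\mathcal{O}_n$ be pairwise distinct $\sigma_d$-rotational orbits, each with rotation number $p/q$. Let $A=\bigcup_{i=1}^n\mathcal{O}_i=\{u_0<\dots<u_{nq-1}\}$. Then $A$ is $\sigma_d$-rotational with $\sigma_d(u_j)=u_{j+np}$ for all $j\in\mathbb{Z}/nq\mathbb{Z}$ (rotation number $p/q$) if and only if the representative sequences of $\mathcal{O}_1,\dots,\mathcal{O}_n$ can be interlaced.
   Context: $\mathbb{T}=\mathbb{R}/\mathbb{Z}$, ordered by representatives in $[0,1)$; $\sigma_d(t)=dt$. A finite set $\{u_0<\dots<u_{N-1}\}$ is $\sigma_d$-rotational if $\sigma_d(u_j)=u_{j+P}$ for a fixed $0\ne P\in\mathbb{Z}/N\mathbb{Z}$; rotation number $P/N$. $q$-tuple notation: $(a_0,\dots,a_{q-1})$, $a_i\in\{0,\dots,d-1\}$, denotes the point with base-$d$ expansion $0.\overline{a_0\dots a_{q-1}}$, digit indices in $\mathbb{Z}/q\mathbb{Z}$. A $(d-1)$-sequence of length $k$ is a nondecreasing sequence of length $k$ with terms in $\{0,\dots,d-2\}$. Representative sequence: let $1\le p\le q-1$, $p^*$ the inverse of $p$ mod $q$, and let $\mathcal{O}$ be a $\sigma_d$-rotational orbit with rotation number $p/q$ whose least element is $t=(a_0,\dots,a_{q-1})$. Its representative sequence is $c_0,\dots,c_{q-1}$ with $c_k=a_{kp^*}$ for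 $0\le k\le q-p-1$ and $c_k=a_{kp^*}-1$ for $q-p\le k\le q-1$; it is a $(d-1)$-sequence of length $q$. Sequences $s_i=b^{(i)}_0,\dots,b^{(i)}_{q-1}$ ($1\le i\le n$) can be interlaced if for some relabeling (permutation) of the indices $i$, the sequence $b^{(1)}_0,\dots,b^{(n)}_0,b^{(1)}_1,\dots,b^{(n)}_1,\dots,b^{(1)}_{q-1},\dots,b^{(n)}_{q-1}$ is a $(d-1)$-sequence. *)

theory Defs
  imports Complex_Main
begin

text \<open>The circle T = R/Z is represented by reals in [0,1); sigma_d(t) = frac(d t).\<close>

definition sigma :: "nat \<Rightarrow> real \<Rightarrow> real" where
  "sigma d t = frac (real d * t)"

definition rotates_by :: "nat \<Rightarrow> real set \<Rightarrow> nat \<Rightarrow> bool" where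
  "rotates_by d A P \<longleftrightarrow> finite A \<and> A \<subseteq> {0..<1} \<and>
     (\<forall>j < card A. sigma d (sorted_list_of_set A ! j)
                   = sorted_list_of_set A ! ((j + P) mod card A))"

definition rotational :: "nat \<Rightarrow> real set \<Rightarrow> bool" where
  "rotational d A \<longleftrightarrow> (\<exists>P. P mod card A \<noteq> 0 \<and> rotates_by d A P)"

definition rot_orbit :: "nat \<Rightarrow> nat \<Rightarrow> nat \<Rightarrow> real set \<Rightarrow> bool" where
  "rot_orbit d p q Orb \<longleftrightarrow> card Orb = q \<and> rotational d Orb \<and> rotates_by d Orb p \<and>
     (\<exists>t\<in>Orb. Orb = range (\<lambda>k. (sigma d ^^ k) t))"

text \<open>i-th base-d digit (i = 0,1,...) of t in [0,1): t = 0.a_0 a_1 a_2 ...\<close>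
definition digit :: "nat \<Rightarrow> real \<Rightarrow> nat \<Rightarrow> int" where
  "digit d t i = \<lfloor>real d ^ Suc i * t\<rfloor> mod int d"

definition inv_mod :: "nat \<Rightarrow> nat \<Rightarrow> nat" where
  "inv_mod p q = (SOME x. x < q \<and> (p * x) mod q = 1)"

text \<open>Representative sequence c_0..c_{q-1} of an orbit with rotation number p/q whose
  least element is t = (a_0,...,a_{q-1}).\<close>
definition rep_seq :: "nat \<Rightarrow> nat \<Rightarrow> nat \<Rightarrow> real \<Rightarrow> nat \<Rightarrow> int" where
  "rep_seq d q p t k =
     (if k < q - p then digit d t ((k * inv_mod p q) mod q)
      else digit d t ((k * inv_mod p q) mod q) - 1)"

definition dseq :: "nat \<Rightarrow> nat \<Rightarrow> (nat \<Rightarrow> int) \<Rightarrow> bool" where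
  "dseq d len f \<longleftrightarrow> (\<forall>m < len. 0 \<le> f m \<and> f m \<le> int d - 2) \<and>
     (\<forall>m m'. m \<le> m' \<and> m' < len \<longrightarrow> f m \<le> f m')"

definition interlaceable :: "nat \<Rightarrow> nat \<Rightarrow> nat \<Rightarrow> (nat \<Rightarrow> nat \<Rightarrow> int) \<Rightarrow> bool" where
  "interlaceable d q n s \<longleftrightarrow> (\<exists>\<pi>. bij_betw \<pi> {..<n} {..<n} \<and>
     dseq d (n * q) (\<lambda>m. s (\<pi> (m mod n)) (m div n)))"

end

theory Submission
  imports Defs "HOL-Number_Theory.Cong"
begin
lemma sigma_eq: "sigma d t = real d * t - of_int \<lfloor>real d * t\<rfloor>"
  unfolding sigma_def frac_def ..
lemma smod: fixes m N P :: nat assumes "m < N" "P < N" shows "(m+P) mod N = (if m+P<N then m+P else m+P-N)"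
proof (cases "m+P<N")
  case False
  then have e: "m+P = (m+P-N) + N" by simp
  have "(m+P) mod N = ((m+P-N) + N) mod N" by (subst e, rule refl)
  also have "\<dots> = (m+P-N) mod N" by simp
  also have "\<dots> = m+P-N" using assms by simp
  finally show ?thesis using False by simp
qed simp
lemma seq_nondec:
  fixes y :: "nat \<Rightarrow> real" and d N P :: nat
  assumes d: "d \<ge> 2" and P: "0 < P" "P < N"
    and rng: "\<And>m. m < N \<Longrightarrow> 0 \<le> y m \<and> y m < 1"
    and sig: "\<And>m. m < N \<Longrightarrow> sigma d (y m) = y ((m+P) mod N)"
    and ds: "dseq d N (\<lambda>m. \<lfloor>real d * y m\<rfloor> - (if m < N - P then 0 else 1))"
  shows "Suc m < N \<Longrightarrow> y m \<le> y (Suc m)"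
proof -
  define C where "C m = \<lfloor>real d * y m\<rfloor> - (if m < N - P then 0 else 1)" for m
  have F: "real d * y m = of_int (C m) + (if m < N - P then 0 else 1) + y ((m+P) mod N)" if "m < N" for m
  proof -
    have h: "real d * y m = of_int \<lfloor>real d * y m\<rfloor> + y((m+P) mod N)"
      using sig[OF that] sigma_eq[of d "y m"] by linarith
    show ?thesis unfolding C_def of_int_diff using h by (cases "m < N-P") auto
  qed
  define \<Delta> where "\<Delta> m = (if Suc m < N then y (Suc m) - y m else y 0 + 1 - y (N-1))" for m
  define g where "g m = (if Suc m < N then C (Suc m) - C m else C 0 + int d - 1 - C (N-1))" for m
  have dsC: "dseq d N C" using ds by (simp add: C_def[abs_def])
  have gnn: "g m \<ge> 0" if "m < N" for m
  proof (cases "Suc m < N")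
    case True then show ?thesis using dsC by (simp add: g_def dseq_def)
  next
    case False
    have "C 0 \<ge> 0" "C (N-1) \<le> int d - 2" using dsC P unfolding dseq_def by auto
    then show ?thesis using False by (simp add: g_def)
  qed
  have key: "real d * \<Delta> m = of_int (g m) + \<Delta> ((m+P) mod N)" if "m < N" for m
  proof (cases "Suc m < N")
    case True
    have D1: "\<Delta> m = y (Suc m) - y m" "g m = C (Suc m) - C m" using True by (simp_all add: \<Delta>_def g_def)
    have dist: "real d * (y (Suc m) - y m) = real d * y (Suc m) - real d * y m"
      by (simp add: right_diff_distrib)
    have F1: "real d * y (Suc m) = of_int (C (Suc m)) + (if Suc m < N - P then 0 else 1) + y ((Suc m+P) mod N)"
      using F[OF True] .
    note F0 = F[OF that]
    show ?thesis
    proof (cases "Suc m < N - P")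
      case True2: True
      then have a: "m+P<N" "Suc m + P < N" "m < N - P" by arith+
      then have "(Suc m + P) mod N = Suc (m+P)" "(m+P) mod N = m + P" by simp_all
      moreover have "\<Delta> (m+P) = y (Suc (m+P)) - y (m+P)" using a by (simp add: \<Delta>_def)
      ultimately show ?thesis using F1 F0 True2 a D1 dist by simp
    next
      case False2: False
      show ?thesis
      proof (cases "Suc m = N - P")
        case True3: True
        then have a: "Suc m + P = N" "m + P = N - 1" "m < N - P" using P True by arith+
        then have "(Suc m + P) mod N = 0" "(m+P) mod N = N - 1" using P by simp_all
        moreover have "\<Delta> (N-1) = y 0 + 1 - y (N-1)" using P by (simp add: \<Delta>_def)
        ultimately show ?thesis using F1 F0 False2 a D1 dist by simp
      next
        case False3: False
        have a: "\<not> m+P<N" "\<not> Suc m+P<N" "\<not> m < N - P" using P False2 False3 True by arith+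
        have b: "(m+P) mod N = m+P-N" using smod[of m N P] a P True by simp
        have c: "(Suc m+P) mod N = Suc (m+P-N)" using smod[of "Suc m" N P] a P True by simp
        have e: "Suc (m+P-N) < N" using a P True by arith
        have "\<Delta> (m+P-N) = y (Suc (m+P-N)) - y (m+P-N)" using e by (simp add: \<Delta>_def)
        then show ?thesis using F1 F0 False2 a b c D1 dist by simp
      qed
    qed
  next
    case False
    then have m: "m = N - 1" using that by simp
    have Fa: "real d * y 0 = of_int (C 0) + y P" using F[of 0] P by simp
    have "(N - 1 + P) mod N = P - 1" using smod[of "N-1" N P] P by simp
    then have Fb: "real d * y (N-1) = of_int (C (N-1)) + 1 + y (P - 1)"
      using F[of "N-1"] P by simp
    have "(m+P) mod N = P - 1" using m \<open>(N - 1 + P) mod N = P - 1\<close> by simp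
    moreover have "\<Delta> (P - 1) = y P - y (P - 1)" using P by (simp add: \<Delta>_def)
    moreover have "\<Delta> m = y 0 + 1 - y (N-1)" "g m = C 0 + int d - 1 - C (N-1)"
      using False by (simp_all add: \<Delta>_def g_def m)
    moreover have "real d * (y 0 + 1 - y (N-1)) = real d * y 0 + real d - real d * y (N-1)"
      by (simp add: algebra_simps)
    ultimately show ?thesis using Fa Fb by simp
  qed
  obtain m0 where m0: "m0 < N" "\<And>m. m < N \<Longrightarrow> \<Delta> m0 \<le> \<Delta> m"
  proof -
    let ?M = "Min (\<Delta> ` {..<N})"
    have "?M \<in> \<Delta> ` {..<N}" using P by (intro Min_in) auto
    then obtain m0 where "m0 < N" "\<Delta> m0 = ?M" by auto
    then show ?thesis using that by auto
  qed
  have "(m0+P) mod N < N" using P by simp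
  then have "\<Delta> m0 \<le> \<Delta> ((m0+P) mod N)" by (rule m0(2))
  then have "real d * \<Delta> m0 \<ge> \<Delta> m0"
    using key[OF m0(1)] gnn[OF m0(1)] by linarith
  then have "(real d - 1) * \<Delta> m0 \<ge> 0" by (simp add: algebra_simps)
  moreover have "real d - 1 > 0" using d by simp
  ultimately have "\<Delta> m0 \<ge> 0" by (simp add: zero_le_mult_iff)
  moreover assume "Suc m < N"
  ultimately show "y m \<le> y (Suc m)" using m0(2)[of m] by (simp add: \<Delta>_def)
qed


lemma chain_mono:
  fixes f :: "nat \<Rightarrow> 'a::order"
  assumes "\<And>m. Suc m < N \<Longrightarrow> f m \<le> f (Suc m)"
  shows "m \<le> m' \<Longrightarrow> m' < N \<Longrightarrow> f m \<le> f m'"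
proof (induction m' rule: nat.induct)
  case zero then show ?case by simp
next
  case (Suc k)
  show ?case
  proof (cases "m = Suc k")
    case False
    then have "f m \<le> f k" using Suc by simp
    also have "\<dots> \<le> f (Suc k)" using assms Suc.prems by simp
    finally show ?thesis .
  qed simp
qed

lemma seq_dseq:
  fixes y :: "nat \<Rightarrow> real" and d N P :: nat
  assumes d: "d \<ge> 2" and P: "0 < P" "P < N"
    and rng: "\<And>m. m < N \<Longrightarrow> 0 \<le> y m \<and> y m < 1"
    and sig: "\<And>m. m < N \<Longrightarrow> sigma d (y m) = y ((m+P) mod N)"
    and inc: "\<And>m. Suc m < N \<Longrightarrow> y m < y (Suc m)"
  shows "dseq d N (\<lambda>m. \<lfloor>real d * y m\<rfloor> - (if m < N - P then 0 else 1))"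
proof -
  define C where "C m = \<lfloor>real d * y m\<rfloor> - (if m < N - P then 0 else 1)" for m
  define V where "V m = (if m < N - P then 0 else 1) + y ((m+P) mod N)" for m
  have F: "real d * y m = of_int (C m) + V m" if "m < N" for m
  proof -
    have h: "real d * y m = of_int \<lfloor>real d * y m\<rfloor> + y((m+P) mod N)"
      using sig[OF that] sigma_eq[of d "y m"] by linarith
    show ?thesis unfolding C_def V_def of_int_diff using h by (cases "m < N-P") auto
  qed
  have ymono: "y m \<le> y m'" if "m \<le> m'" "m' < N" for m m'
    using chain_mono[of N y m m'] inc that by (simp add: less_imp_le)
  have Vd: "V (Suc m) - V m \<le> 1" if "Suc m < N" for m
  proof -
    have r1: "0 \<le> y ((m+P) mod N)" "y ((m+P) mod N) < 1" using rng[of "(m+P) mod N"] P by auto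
    have r2: "0 \<le> y ((Suc m+P) mod N)" "y ((Suc m+P) mod N) < 1" using rng[of "(Suc m+P) mod N"] P by auto
    show ?thesis
    proof (cases "Suc m = N - P")
      case True
      then have a: "Suc m + P = N" "m + P = N - 1" "m < N - P" using P that by arith+
      then have "(Suc m + P) mod N = 0" "(m+P) mod N = N - 1" using P by simp_all
      moreover have "y 0 \<le> y (N-1)" using ymono[of 0 "N-1"] P by simp
      ultimately show ?thesis using a True by (simp add: V_def)
    next
      case False
      then have "(Suc m < N - P) = (m < N - P)" by arith
      then show ?thesis using r1 r2 by (simp add: V_def)
    qed
  qed
  have Cm: "C m \<le> C (Suc m)" if "Suc m < N" for m
  proof -
    have "real d * (y (Suc m) - y m) > 0" using inc[OF that] d by simp
    then have "real d * y (Suc m) - real d * y m > 0" by (simp add: right_diff_distrib)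
    then have "of_int (C (Suc m) - C m) > (-1::real)"
      using F[OF that] F[of m] that Vd[OF that] by simp
    then show ?thesis by simp
  qed
  have C0: "C 0 \<ge> 0" using rng[of 0] P d by (simp add: C_def)
  have CN: "C (N-1) \<le> int d - 2"
  proof -
    have "real d * y (N-1) < real d * 1" using rng[of "N-1"] P d by (intro mult_strict_left_mono) auto
    then have "\<lfloor>real d * y (N-1)\<rfloor> < int d" by (simp add: floor_less_iff)
    moreover have "\<not> N - 1 < N - P" using P by arith
    ultimately show ?thesis by (simp add: C_def)
  qed
  have mono: "C m \<le> C m'" if "m \<le> m'" "m' < N" for m m'
    using chain_mono[of N C m m'] Cm that by simp
  show ?thesis unfolding dseq_def C_def[symmetric]
  proof (intro conjI allI impI)
    fix m assume m: "m < N"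
    show "0 \<le> C m" using mono[of 0 m] m C0 by simp
    have "m \<le> N - 1" using m by simp
    then show "C m \<le> int d - 2" using mono[of m "N-1"] m CN by simp
  next
    fix m m' assume "m \<le> m' \<and> m' < N" then show "C m \<le> C m'" using mono by simp
  qed
qed


lemma iter_frac: assumes "0 \<le> t" "t < 1" shows "(sigma d ^^ i) t = frac (real d ^ i * t)"
proof (induction i)
  case 0 then show ?case using assms by (simp add: frac_eq)
next
  case (Suc i)
  let ?z = "real d ^ i * t"
  have e: "real d * frac ?z = real d ^ Suc i * t + of_int (- (int d * \<lfloor>?z\<rfloor>))"
    by (simp add: frac_def algebra_simps)
  have "(sigma d ^^ Suc i) t = sigma d ((sigma d ^^ i) t)" by simp
  also have "\<dots> = sigma d (frac ?z)" using Suc.IH by simp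
  also have "\<dots> = frac (real d * frac ?z)" by (simp add: sigma_def)
  also have "\<dots> = frac (real d ^ Suc i * t)" unfolding e by (rule frac_add_of_int_right)
  finally show ?case .
qed

lemma digit_iter: assumes "d \<ge> 1" "0 \<le> t" "t < 1" shows "digit d t i = \<lfloor>real d * (sigma d ^^ i) t\<rfloor>"
proof -
  let ?z = "real d ^ i * t"
  have w: "0 \<le> \<lfloor>real d * frac ?z\<rfloor>" "\<lfloor>real d * frac ?z\<rfloor> < int d"
  proof -
    have "real d * frac ?z < real d * 1" using assms frac_lt_1[of ?z] by (intro mult_strict_left_mono) auto
    then show "\<lfloor>real d * frac ?z\<rfloor> < int d" by (simp add: floor_less_iff)
    show "0 \<le> \<lfloor>real d * frac ?z\<rfloor>" by simp
  qed
  have "real d ^ Suc i * t = real d * frac ?z + of_int (int d * \<lfloor>?z\<rfloor>)"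
    by (simp add: frac_def algebra_simps)
  then have "\<lfloor>real d ^ Suc i * t\<rfloor> = \<lfloor>real d * frac ?z\<rfloor> + int d * \<lfloor>?z\<rfloor>"
    by (metis floor_add_int)
  then have "digit d t i = \<lfloor>real d * frac ?z\<rfloor> mod int d" by (simp add: digit_def)
  also have "\<dots> = \<lfloor>real d * frac ?z\<rfloor>" using w by simp
  finally show ?thesis using iter_frac[OF assms(2,3)] by simp
qed

lemma inv_mod_prop:
  assumes "coprime p q" "q \<ge> 2"
  shows "inv_mod p q < q \<and> (p * inv_mod p q) mod q = 1"
proof -
  obtain x where "[p * x = Suc 0] (mod q)" using cong_solve_coprime_nat[OF assms(1)] by blast
  then have "(p * x) mod q = 1" using assms(2) by (simp add: cong_def)
  then have "(p * (x mod q)) mod q = 1" by (simp add: mod_mult_right_eq)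
  then have "\<exists>y. y < q \<and> (p * y) mod q = 1" using assms(2) by (intro exI[of _ "x mod q"]) auto
  then show ?thesis unfolding inv_mod_def by (rule someI_ex)
qed

lemma solve_lin:
  assumes "coprime p q" "q \<ge> 2" "a < q" "b < q"
  shows "(a + ((b + q - a) * inv_mod p q) * p) mod q = b"
proof -
  have h: "(p * inv_mod p q) mod q = 1" using inv_mod_prop[OF assms(1,2)] by simp
  have "((b + q - a) * inv_mod p q * p) mod q = ((b + q - a) * ((p * inv_mod p q) mod q)) mod q"
    by (metis mod_mult_right_eq mult.assoc mult.commute)
  also have "\<dots> = (b + q - a) mod q" using h by simp
  finally have "(a + (b + q - a) * inv_mod p q * p) mod q = (a + (b + q - a)) mod q"
    by (metis mod_add_right_eq)
  also have "a + (b + q - a) = b + q" using assms by simp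
  finally show ?thesis using assms by simp
qed

lemma orb_basic:
  assumes "rot_orbit d p q Ob"
  shows "finite Ob" "Ob \<subseteq> {0..<1}" "card Ob = q"
    "\<And>k. k < q \<Longrightarrow> sigma d (sorted_list_of_set Ob ! k) = sorted_list_of_set Ob ! ((k+p) mod q)"
  using assms unfolding rot_orbit_def rotates_by_def by auto

lemma orb_iter:
  assumes "rot_orbit d p q Ob" "a < q"
  shows "(sigma d ^^ j) (sorted_list_of_set Ob ! a) = sorted_list_of_set Ob ! ((a + j*p) mod q)"
proof (induction j)
  case 0 then show ?case using assms(2) by simp
next
  case (Suc j)
  have "q > 0" using assms(2) by simp
  then have "(a + j*p) mod q < q" by simp
  then have "(sigma d ^^ Suc j) (sorted_list_of_set Ob ! a) = sorted_list_of_set Ob ! (((a + j*p) mod q + p) mod q)"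
    using Suc orb_basic(4)[OF assms(1)] by simp
  also have "((a + j*p) mod q + p) mod q = (a + Suc j * p) mod q" by (simp only: mod_add_left_eq) (simp add: algebra_simps)
  finally show ?case .
qed

lemma orb_closed:
  assumes "rot_orbit d p q Ob" "s \<in> Ob"
  shows "sigma d s \<in> Ob"
proof -
  let ?xs = "sorted_list_of_set Ob"
  have f: "finite Ob" "card Ob = q" using orb_basic[OF assms(1)] by auto
  obtain a where a: "a < q" "s = ?xs ! a" using assms(2) f by (metis in_set_conv_nth length_sorted_list_of_set set_sorted_list_of_set)
  then have "q > 0" by simp
  then have "(a+p) mod q < q" by simp
  then show ?thesis using orb_basic(4)[OF assms(1) a(1)] a f
    by (metis length_sorted_list_of_set nth_mem set_sorted_list_of_set)
qed

lemma orb_closed_iter: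
  assumes "rot_orbit d p q Ob" "s \<in> Ob"
  shows "(sigma d ^^ j) s \<in> Ob"
  by (induction j) (use assms orb_closed in auto)

lemma orb_meet:
  assumes "rot_orbit d p q O1" "rot_orbit d p q O2" "coprime p q" "q \<ge> 2" "s \<in> O1" "s \<in> O2"
  shows "O1 \<subseteq> O2"
proof
  let ?xs = "sorted_list_of_set O1"
  have f: "finite O1" "card O1 = q" using orb_basic[OF assms(1)] by auto
  obtain a where a: "a < q" "s = ?xs ! a" using assms(5) f by (metis in_set_conv_nth length_sorted_list_of_set set_sorted_list_of_set)
  fix z assume "z \<in> O1"
  then obtain b where b: "b < q" "z = ?xs ! b" using f by (metis in_set_conv_nth length_sorted_list_of_set set_sorted_list_of_set)
  let ?j = "(b + q - a) * inv_mod p q"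
  have "(sigma d ^^ ?j) s = ?xs ! ((a + ?j * p) mod q)" using orb_iter[OF assms(1) a(1)] a by simp
  also have "\<dots> = z" using solve_lin[OF assms(3,4) a(1) b(1)] b by simp
  finally show "z \<in> O2" using orb_closed_iter[OF assms(2,6)] by metis
qed

lemma orb_rep:
  assumes "rot_orbit d p q Ob" "coprime p q" "q \<ge> 2" "d \<ge> 1" "k < q"
  shows "rep_seq d q p (Min Ob) k = \<lfloor>real d * (sorted_list_of_set Ob ! k)\<rfloor> - (if k < q - p then 0 else 1)"
proof -
  let ?xs = "sorted_list_of_set Ob"
  have f: "finite Ob" "card Ob = q" using orb_basic[OF assms(1)] by auto
  then have "Ob \<noteq> {}" using assms(3) by auto
  then have m: "Min Ob = ?xs ! 0" using f sorted_list_of_set_nonempty[of Ob] by simp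
  have h: "(p * inv_mod p q) mod q = 1" using inv_mod_prop[OF assms(2,3)] by simp
  let ?j = "(k * inv_mod p q) mod q"
  have "(0 + ?j * p) mod q = (k * inv_mod p q * p) mod q"
    by (simp add: mod_mult_left_eq)
  also have "\<dots> = (k * (p * inv_mod p q)) mod q" by (simp add: algebra_simps)
  also have "\<dots> = (k * ((p * inv_mod p q) mod q)) mod q" by (metis mod_mult_right_eq)
  also have "\<dots> = k" using h assms(5) by simp
  finally have jj: "(0 + ?j * p) mod q = k" .
  have "Min Ob \<in> Ob" using f \<open>Ob \<noteq> {}\<close> by simp
  then have "0 \<le> Min Ob" "Min Ob < 1" using orb_basic(2)[OF assms(1)] by auto
  then have "digit d (Min Ob) ?j = \<lfloor>real d * ?xs ! k\<rfloor>"
    using digit_iter[OF assms(4)] orb_iter[OF assms(1), of 0 ?j] assms(3) jj m by simp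
  then show ?thesis unfolding rep_seq_def by simp
qed


lemma idx_mod:
  fixes r n a q :: nat assumes "r < n" "q > 0"
  shows "(r + n*a) mod (n*q) = r + n*(a mod q)"
proof -
  have "a mod q + 1 \<le> q" using assms(2) by (simp add: Suc_leI)
  then have "n * (a mod q + 1) \<le> n * q" by (rule mult_le_mono2)
  then have b: "r + n*(a mod q) < n*q" using assms(1) by (simp add: algebra_simps)
  have "a = a mod q + q * (a div q)" by simp
  then have e: "r + n*a = (r + n*(a mod q)) + (n*q) * (a div q)"
    by (metis add.assoc add_mult_distrib2 mult.assoc)
  have "(r + n*a) mod (n*q) = ((r + n*(a mod q)) + (n*q) * (a div q)) mod (n*q)" by (simp only: e)
  also have "\<dots> = (r + n*(a mod q)) mod (n*q)" by (rule mod_mult_self2)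
  also have "\<dots> = r + n*(a mod q)" using b by simp
  finally show ?thesis .
qed

lemma idx_bound:
  fixes r n k q :: nat assumes "r < n" "k < q"
  shows "r + n*k < n*q"
proof -
  have "k + 1 \<le> q" using assms(2) by simp
  then have "n * (k + 1) \<le> n * q" by (rule mult_le_mono2)
  then show ?thesis using assms(1) by (simp add: algebra_simps)
qed

lemma idx_div:
  fixes r n k :: nat assumes "r < n"
  shows "(r + n*k) mod n = r" "(r + n*k) div n = k"
  using assms by simp_all

lemma idx_decomp:
  fixes m n q :: nat assumes "m < n*q"
  shows "m mod n < n" "m div n < q" "m = m mod n + n * (m div n)"
proof -
  have n: "n > 0" using assms by (cases n) auto
  then show "m mod n < n" by simp
  show "m div n < q" using assms by (simp add: div_less_iff_less_mult mult.commute n)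
  show "m = m mod n + n * (m div n)" by simp
qed

lemma dseq_cong: "(\<And>m. m < len \<Longrightarrow> f m = g m) \<Longrightarrow> dseq d len f = dseq d len g"
  unfolding dseq_def by (metis le_less_trans)


theorem corollary3p3:
  fixes d q p n :: nat and Orb :: "nat \<Rightarrow> real set"
  assumes "d \<ge> 2" and "q \<ge> 2" and "p < q" and "coprime p q" and "n \<ge> 1"
    and "\<And>i. i < n \<Longrightarrow> rot_orbit d p q (Orb i)"
    and "\<And>i j. i < n \<Longrightarrow> j < n \<Longrightarrow> i \<noteq> j \<Longrightarrow> Orb i \<noteq> Orb j"
  shows "rotates_by d (\<Union>i<n. Orb i) (n * p) \<longleftrightarrow>
         interlaceable d q n (\<lambda>i. rep_seq d q p (Min (Orb i)))"
proof -
  note orbs = assms(6)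
  define xs where "xs i = sorted_list_of_set (Orb i)" for i
  define A where "A = (\<Union>i<n. Orb i)"
  have q0: "q > 0" using assms(2) by simp
  have p1: "p \<ge> 1"
  proof (rule ccontr)
    assume "\<not> p \<ge> 1" then have "p = 0" by simp
    then show False using assms(2,4) by simp
  qed
  have fin: "finite (Orb i)" "Orb i \<subseteq> {0..<1}" "card (Orb i) = q" if "i<n" for i
    using orb_basic[OF orbs[OF that]] by auto
  have xsl: "length (xs i) = q" "sorted_wrt (<) (xs i)" "set (xs i) = Orb i" if "i<n" for i
    using fin[OF that] by (simp_all add: xs_def)
  have xsig: "sigma d (xs i ! k) = xs i ! ((k+p) mod q)" if "i<n" "k<q" for i k
    using orb_basic(4)[OF orbs[OF that(1)] that(2)] by (simp add: xs_def)
  have rep: "rep_seq d q p (Min (Orb i)) k = \<lfloor>real d * (xs i ! k)\<rfloor> - (if k < q - p then 0 else 1)"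
    if "i<n" "k<q" for i k
    using orb_rep[OF orbs[OF that(1)] assms(4,2) _ that(2)] assms(1) by (simp add: xs_def)
  have disj: "Orb i \<inter> Orb j = {}" if "i<n" "j<n" "i\<noteq>j" for i j
  proof (rule ccontr)
    assume "Orb i \<inter> Orb j \<noteq> {}"
    then obtain s where "s \<in> Orb i" "s \<in> Orb j" by blast
    then have "Orb i = Orb j"
      using orb_meet[OF orbs[OF that(1)] orbs[OF that(2)] assms(4,2)]
        orb_meet[OF orbs[OF that(2)] orbs[OF that(1)] assms(4,2)] by blast
    then show False using assms(7) that by blast
  qed
  have finA: "finite A" and subA: "A \<subseteq> {0..<1}" using fin by (auto simp: A_def)
  have cardA: "card A = n*q"
  proof -
    have "card A = (\<Sum>i<n. card (Orb i))" unfolding A_def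
      by (rule card_UN_disjoint) (use fin disj in auto)
    also have "\<dots> = n*q" using fin by simp
    finally show ?thesis .
  qed
  have NP: "0 < n*p" "n*p < n*q" using assms(5,3) p1 by auto
  have Nq: "0 < n*q" using NP by simp
  have NmP: "n*q - n*p = n*(q-p)" by (simp add: diff_mult_distrib2)
  have cond: "(m div n < q - p) = (m < n*q - n*p)" for m
    using assms(5) NmP by (simp add: div_less_iff_less_mult mult.commute)
  show ?thesis unfolding A_def[symmetric]
  proof
    assume "interlaceable d q n (\<lambda>i. rep_seq d q p (Min (Orb i)))"
    then obtain \<pi> where pb: "bij_betw \<pi> {..<n} {..<n}"
      and ds: "dseq d (n*q) (\<lambda>m. rep_seq d q p (Min (Orb (\<pi> (m mod n)))) (m div n))"
      unfolding interlaceable_def by blast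
    have pin: "\<pi> r < n" if "r < n" for r using pb that by (auto simp: bij_betw_def)
    define y where "y m = xs (\<pi> (m mod n)) ! (m div n)" for m
    have yin: "y m \<in> Orb (\<pi> (m mod n))" if "m < n*q" for m
    proof -
      have r: "m mod n < n" "m div n < q" using idx_decomp[OF that] by auto
      show ?thesis using xsl[OF pin[OF r(1)]] r(2) unfolding y_def by (metis nth_mem)
    qed
    have yrng: "0 \<le> y m \<and> y m < 1" if "m < n*q" for m
      using yin[OF that] fin(2)[OF pin[OF idx_decomp(1)[OF that]]] by auto
    have ysig: "sigma d (y m) = y ((m + n*p) mod (n*q))" if "m < n*q" for m
    proof -
      let ?r = "m mod n" and ?k = "m div n"
      have r: "?r < n" "?k < q" "m = ?r + n * ?k" using idx_decomp[OF that] by auto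
      have "?r + n*(?k+p) = (?r + n*?k) + n*p" by (simp add: algebra_simps)
      then have e: "m + n*p = ?r + n*(?k+p)" using r(3) by linarith
      have "(m + n*p) mod (n*q) = ?r + n*((?k+p) mod q)" unfolding e using idx_mod[OF r(1) q0] .
      then have "y ((m + n*p) mod (n*q)) = xs (\<pi> ?r) ! ((?k+p) mod q)" using r(1) by (simp add: y_def)
      moreover have "sigma d (y m) = xs (\<pi> ?r) ! ((?k+p) mod q)"
        using xsig[OF pin[OF r(1)] r(2)] by (simp add: y_def)
      ultimately show ?thesis by simp
    qed
    have yD: "rep_seq d q p (Min (Orb (\<pi> (m mod n)))) (m div n)
        = \<lfloor>real d * y m\<rfloor> - (if m < n*q - n*p then 0 else 1)" if "m < n*q" for m
      using rep[OF pin[OF idx_decomp(1)[OF that]] idx_decomp(2)[OF that]] cond[of m] by (simp add: y_def)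
    have "dseq d (n*q) (\<lambda>m. rep_seq d q p (Min (Orb (\<pi> (m mod n)))) (m div n))
        = dseq d (n*q) (\<lambda>m. \<lfloor>real d * y m\<rfloor> - (if m < n*q - n*p then 0 else 1))"
      by (rule dseq_cong) (simp add: yD)
    with ds have ds2: "dseq d (n*q) (\<lambda>m. \<lfloor>real d * y m\<rfloor> - (if m < n*q - n*p then 0 else 1))" by simp
    have ynd: "y m \<le> y (Suc m)" if "Suc m < n*q" for m
      using seq_nondec[OF assms(1) NP yrng ysig ds2 that] .
    have yinj: "m = m'" if "m < n*q" "m' < n*q" "y m = y m'" for m m'
    proof -
      have r: "m mod n < n" "m div n < q" "m' mod n < n" "m' div n < q"
        using idx_decomp[OF that(1)] idx_decomp[OF that(2)] by auto
      have pe: "\<pi> (m mod n) = \<pi> (m' mod n)"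
      proof (rule ccontr)
        assume "\<pi> (m mod n) \<noteq> \<pi> (m' mod n)"
        then have "Orb (\<pi> (m mod n)) \<inter> Orb (\<pi> (m' mod n)) = {}" using disj pin r by auto
        then show False using yin[OF that(1)] yin[OF that(2)] that(3) by auto
      qed
      then have me: "m mod n = m' mod n" using pb r by (auto simp: bij_betw_def inj_on_def)
      let ?i = "\<pi> (m mod n)"
      have "xs ?i ! (m div n) = xs ?i ! (m' div n)" using that(3) me by (simp add: y_def)
      moreover have "distinct (xs ?i)" "length (xs ?i) = q"
        using xsl[OF pin[OF r(1)]] by (auto simp: strict_sorted_iff)
      ultimately have "m div n = m' div n" using r by (simp add: nth_eq_iff_index_eq)
      then show "m = m'" using me by (metis mod_div_mult_eq)
    qed
    have ylt: "y m < y m'" if "m < m'" "m' < n*q" for m m'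
    proof -
      have "y m \<le> y m'" using chain_mono[of "n*q" y m m'] ynd that by simp
      moreover have "y m \<noteq> y m'" using yinj[of m m'] that by force
      ultimately show ?thesis by simp
    qed
    let ?L = "map y [0..<n*q]"
    have sL: "sorted_wrt (<) ?L" unfolding sorted_wrt_iff_nth_less using ylt by simp
    have setL: "set ?L = A"
    proof
      show "set ?L \<subseteq> A"
      proof
        fix z assume "z \<in> set ?L"
        then obtain m where m: "m < n*q" "z = y m" by auto
        then show "z \<in> A" using yin[OF m(1)] pin[OF idx_decomp(1)[OF m(1)]] by (auto simp: A_def)
      qed
      show "A \<subseteq> set ?L"
      proof
        fix z assume "z \<in> A"
        then obtain i where i: "i < n" "z \<in> Orb i" by (auto simp: A_def)
        then obtain k where k: "k < q" "z = xs i ! k" using xsl[OF i(1)] by (metis in_set_conv_nth)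
        have "i \<in> \<pi> ` {..<n}" using pb i(1) by (auto simp: bij_betw_def)
        then obtain r where r: "r < n" "\<pi> r = i" by auto
        have "r + n*k < n*q" using idx_bound[OF r(1) k(1)] .
        moreover have "y (r + n*k) = z" using r k by (simp add: y_def)
        ultimately show "z \<in> set ?L" by force
      qed
    qed
    have ul: "sorted_list_of_set A = ?L"
      using sorted_list_of_set_unique[of A ?L] finA sL setL cardA by simp
    show "rotates_by d A (n*p)"
      unfolding rotates_by_def using finA subA cardA ul ysig Nq by simp
  next
    assume rot: "rotates_by d A (n*p)"
    define u where "u = sorted_list_of_set A"
    have ul: "length u = n*q" "sorted_wrt (<) u" "set u = A" using finA cardA by (simp_all add: u_def)
    have uA: "u!j \<in> A" if "j < n*q" for j using ul that by (metis nth_mem)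
    have usig: "sigma d (u!j) = u!((j + n*p) mod (n*q))" if "j < n*q" for j
      using rot that cardA unfolding rotates_by_def u_def by auto
    have uit: "(sigma d ^^ t) (u!j) = u!((j + t*(n*p)) mod (n*q))" if "j < n*q" for j t
    proof (induction t)
      case 0 then show ?case using that by simp
    next
      case (Suc t)
      have "(j + t*(n*p)) mod (n*q) < n*q" using Nq by simp
      then have "(sigma d ^^ Suc t) (u!j) = u!(((j + t*(n*p)) mod (n*q) + n*p) mod (n*q))"
        using Suc usig by simp
      also have "((j + t*(n*p)) mod (n*q) + n*p) mod (n*q) = (j + Suc t*(n*p)) mod (n*q)"
        by (simp only: mod_add_left_eq) (simp add: algebra_simps)
      finally show ?case .
    qed
    have uinj: "a = b" if "u!a = u!b" "a < n*q" "b < n*q" for a b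
    proof -
      have "distinct u" using ul(2) by (simp add: strict_sorted_iff)
      then show ?thesis using that ul(1) by (simp add: nth_eq_iff_index_eq)
    qed
    have h: "(p * inv_mod p q) mod q = 1" using inv_mod_prop[OF assms(4,2)] by simp
    have ushift: "u!(r + n*k) = (sigma d ^^ (k * inv_mod p q)) (u!r)" if "r<n" "k<q" for r k
    proof -
      have rN: "r < n*q" using idx_bound[OF that(1) q0] by simp
      have "(k*inv_mod p q*p) mod q = (k*(p*inv_mod p q)) mod q" by (simp add: algebra_simps)
      also have "\<dots> = (k*((p*inv_mod p q) mod q)) mod q" by (metis mod_mult_right_eq)
      also have "\<dots> = k" using h that(2) by simp
      finally have kk: "(k*inv_mod p q*p) mod q = k" .
      have "(r + (k * inv_mod p q)*(n*p)) mod (n*q) = r + n*((k*inv_mod p q*p) mod q)"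
        using idx_mod[OF that(1) q0, of "k*inv_mod p q*p"] by (simp add: algebra_simps)
      then show ?thesis using uit[OF rN, of "k * inv_mod p q"] kk by simp
    qed
    define \<pi> where "\<pi> r = (SOME i. i < n \<and> u!r \<in> Orb i)" for r
    have pi: "\<pi> r < n \<and> u!r \<in> Orb (\<pi> r)" if "r < n" for r
    proof -
      have "r < n*q" using idx_bound[OF that q0] by simp
      then have "u!r \<in> A" by (rule uA)
      then have "\<exists>i. i<n \<and> u!r \<in> Orb i" by (auto simp: A_def)
      then show ?thesis unfolding \<pi>_def by (rule someI_ex)
    qed
    have Sin: "u!(r+n*k) \<in> Orb (\<pi> r)" if "r<n" "k<q" for r k
      using ushift[OF that] orb_closed_iter[OF orbs[OF conjunct1[OF pi[OF that(1)]]] conjunct2[OF pi[OF that(1)]]]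
      by simp
    have xsu: "xs (\<pi> r) = map (\<lambda>k. u!(r+n*k)) [0..<q]" if "r<n" for r
    proof -
      let ?L = "map (\<lambda>k. u!(r+n*k)) [0..<q]"
      have sL: "sorted_wrt (<) ?L"
        unfolding sorted_wrt_iff_nth_less
      proof (intro allI impI)
        fix i j assume ij: "i < j" "j < length ?L"
        have "r + n*i < r + n*j" using ij(1) assms(5) by simp
        moreover have "r + n*j < n*q" using idx_bound[OF that] ij by simp
        ultimately have "u!(r+n*i) < u!(r+n*j)" using sorted_wrt_nth_less[OF ul(2)] ul(1) by simp
        then show "?L ! i < ?L ! j" using ij by simp
      qed
      have dL: "distinct ?L" using sL by (simp add: strict_sorted_iff)
      have pr: "\<pi> r < n" using pi[OF that] by simp
      have "set ?L \<subseteq> Orb (\<pi> r)" using Sin[OF that] by auto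
      moreover have "card (set ?L) = q" using distinct_card[OF dL] by simp
      ultimately have sE: "set ?L = Orb (\<pi> r)" using card_subset_eq fin[OF pr] by metis
      show ?thesis using sorted_list_of_set_unique[of "Orb (\<pi> r)" ?L] fin[OF pr] sL sE
        unfolding xs_def by simp
    qed
    have pinj: "inj_on \<pi> {..<n}"
    proof (rule inj_onI)
      fix r r' assume rr: "r \<in> {..<n}" "r' \<in> {..<n}" "\<pi> r = \<pi> r'"
      have "u!r \<in> Orb (\<pi> r')" using pi[of r] rr by simp
      then have "u!r \<in> set (xs (\<pi> r'))" using xsl(3)[of "\<pi> r'"] pi[of r'] rr by simp
      then obtain k where k: "k<q" "u!r = u!(r'+n*k)" using xsu[of r'] rr by auto
      have "r < n*q" using idx_bound[OF _ q0, of r n] rr by simp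
      moreover have "r'+n*k < n*q" using idx_bound[OF _ k(1), of r' n] rr by simp
      ultimately have "r = r' + n*k" using uinj k(2) by blast
      then show "r = r'" using rr(1) by (cases k) auto
    qed
    have pb: "bij_betw \<pi> {..<n} {..<n}"
    proof -
      have "\<pi> ` {..<n} \<subseteq> {..<n}" using pi by auto
      moreover have "card (\<pi> ` {..<n}) = n" using card_image[OF pinj] by simp
      ultimately have "\<pi> ` {..<n} = {..<n}" by (metis card_lessThan card_subset_eq finite_lessThan)
      then show ?thesis using pinj by (simp add: bij_betw_def)
    qed
    have urng: "0 \<le> u!m \<and> u!m < 1" if "m < n*q" for m using uA[OF that] subA by auto
    have uinc: "u!m < u!(Suc m)" if "Suc m < n*q" for m
      using sorted_wrt_nth_less[OF ul(2), of m "Suc m"] ul(1) that by simp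
    have dsu: "dseq d (n*q) (\<lambda>m. \<lfloor>real d * u!m\<rfloor> - (if m < n*q - n*p then 0 else 1))"
      using seq_dseq[OF assms(1) NP urng usig uinc] .
    have eq: "rep_seq d q p (Min (Orb (\<pi> (m mod n)))) (m div n)
        = \<lfloor>real d * u!m\<rfloor> - (if m < n*q - n*p then 0 else 1)" if "m < n*q" for m
    proof -
      have r: "m mod n < n" "m div n < q" "m = m mod n + n * (m div n)" using idx_decomp[OF that] by auto
      have "xs (\<pi> (m mod n)) ! (m div n) = u!m"
        using xsu[OF r(1)] r by simp
      then show ?thesis using rep[OF conjunct1[OF pi[OF r(1)]] r(2)] cond[of m] by simp
    qed
    have "dseq d (n*q) (\<lambda>m. rep_seq d q p (Min (Orb (\<pi> (m mod n)))) (m div n))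
        = dseq d (n*q) (\<lambda>m. \<lfloor>real d * u!m\<rfloor> - (if m < n*q - n*p then 0 else 1))"
      by (rule dseq_cong) (simp add: eq)
    then show "interlaceable d q n (\<lambda>i. rep_seq d q p (Min (Orb i)))"
      unfolding interlaceable_def using pb dsu by auto
  qed
qed

end
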